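(* Let $(\mathbb S,+,\cdot)$ be an S-Field and let $\alpha,\beta\in\mathbb S_0$ with $\alpha\neq0$, $\beta\neq0$ and $\alpha+\beta\neq 0$. Then $\frac{\alpha}{0}+\frac{\beta}{0}=\frac{\alpha+\beta}{0}$.
   Context: An S-Structure is a triple $(\mathbb S,+,\cdot)$ where $\mathbb S$ is a set and $+,\cdot$ are binary operations on $\mathbb S$ such that: $(\mathbb S,+)$ is a commutative group with identity $0$ (the inverse of $s$ is written $-s$, and $s-t:=s+(-t)$); $\mathbb S$ is closed under $\cdot$; and there exists $s\in\mathbb S$ with $0\cdot s\neq 0$ or $s\cdot 0\neq 0$. Multiplication binds tighter than addition. The structures considered come with a distinguished element of $\mathbb S$ denoted $1$. It is Commutative if $s\cdot t=t\cdot s$ for all $s,t$. For a Commutative S-Structure and $\alpha\in\mathbb S$, put $\mathbb S_\alpha=\{s\in\mathbb S:0\cdot s=s\cdot 0=\alpha\}$ and $\Lambda=\{\alpha\in\mathbb S:\mathbb S_\alpha\neq\emptyset\}$. Wheel Distributive: $s\cdot(t+r)+(s\cdot 0)=(s\cdot t)+(s\cdot r)$ for all $s,t,r\in\mathbb S$. S-Associative: for all $m,n\in\mathbb S_0$ and $s\in\mathbb S$, $m\cdot(n\cdot s)=(m\cdot n)\cdot s-([(m-1)\cdot(n-1)]\cdot(0\cdot s))$. Base: if $\mathbb S_0\neq\emptyset$ and $\alpha\in\Lambda$, $q\in\mathbb S_\alpha$ is a Base for $\mathbb S_\alpha$ if $q+\beta\in\mathbb S_\alpha$ for all $\beta\in\mathbb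 S_0$ and every $s\in\mathbb S_\alpha$ equals $q+\beta$ for some $\beta\in\mathbb S_0$. Coordinated: $\mathbb S_0\neq\emptyset$ and every $\mathbb S_\alpha$ with $\alpha\in\Lambda$ has a Base. Standard Bases: a Coordinated Commutative S-Structure has Standard Bases if there is a specified element $q_0(1)\in\mathbb S_1$ which is a Base for $\mathbb S_1$, and for every $\alpha\in\Lambda$ the element $q_0(\alpha):=\alpha\cdot(q_0(1)+1)-1$ lies in $\mathbb S_\alpha$ and is a Base for $\mathbb S_\alpha$. An Essential S-Structure is an S-Structure that is Commutative, Wheel Distributive, S-Associative, has Standard Bases (in particular is Coordinated), satisfies $0,1\in\mathbb S_0$, and satisfies $\mathbb S_0=\{1\cdot x:x\in\mathbb S_0\}$. A Unity is an element $e\in\Lambda$ with $e\cdot s=s\cdot e=s$ for all $s\in\mathbb S$. Scalar Inverses: the structure has a Unity $e$ and for every $x\in\mathbb S_0$ with $x\neq 0$ there is $x^{-1}\in\mathbb S_0$ with $x\cdot x^{-1}=x^{-1}\cdot x=e$. An S-Ring is an Essential S-Structure with a Unity; an S-Field is an S-Ring with Scalar Inverses. Reversible: for $\alpha\in\Lambda$, $q_0(\alpha)$ is Reversible if there exists $\alpha^*\in\Lambda$ with $q_0(1)=\alpha^*\cdot(q_0(\alpha)+\alpha)-\alpha$; then $q_0^*(\alpha):=q_0(\alpha)$. Division By Zero: in an S-Field, for $\alpha\in\mathbb S_0$ with $\alpha\neq0$, $\frac{\alpha}{0}:=q_0^*(\alpha)$. *)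

theory Defs
  imports Main
begin

record 'a sstruct =
  scar  :: "'a set"
  sadd  :: "'a \<Rightarrow> 'a \<Rightarrow> 'a"
  sneg  :: "'a \<Rightarrow> 'a"
  szero :: 'a
  smul  :: "'a \<Rightarrow> 'a \<Rightarrow> 'a"
  sone  :: 'a
  sq1   :: 'a

definition ssub :: "'a sstruct \<Rightarrow> 'a \<Rightarrow> 'a \<Rightarrow> 'a" where
  "ssub R s t = sadd R s (sneg R t)"

definition s_structure :: "'a sstruct \<Rightarrow> bool" where
  "s_structure R \<longleftrightarrow>
     (\<forall>s\<in>scar R. \<forall>t\<in>scar R. sadd R s t \<in> scar R) \<and>
     (\<forall>s\<in>scar R. \<forall>t\<in>scar R. \<forall>r\<in>scar R. sadd R (sadd R s t) r = sadd R s (sadd R t r)) \<and>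
     (\<forall>s\<in>scar R. \<forall>t\<in>scar R. sadd R s t = sadd R t s) \<and>
     szero R \<in> scar R \<and>
     (\<forall>s\<in>scar R. sadd R s (szero R) = s) \<and>
     (\<forall>s\<in>scar R. sneg R s \<in> scar R \<and> sadd R s (sneg R s) = szero R) \<and>
     (\<forall>s\<in>scar R. \<forall>t\<in>scar R. smul R s t \<in> scar R) \<and>
     (\<exists>s\<in>scar R. smul R (szero R) s \<noteq> szero R \<or> smul R s (szero R) \<noteq> szero R) \<and>
     sone R \<in> scar R"

definition s_commutative :: "'a sstruct \<Rightarrow> bool" where
  "s_commutative R \<longleftrightarrow> (\<forall>s\<in>scar R. \<forall>t\<in>scar R. smul R s t = smul R t s)"

definition S_alpha :: "'a sstruct \<Rightarrow> 'a \<Rightarrow> 'a set" where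
  "S_alpha R a = {s \<in> scar R. smul R (szero R) s = a \<and> smul R s (szero R) = a}"

definition Lambda :: "'a sstruct \<Rightarrow> 'a set" where
  "Lambda R = {a \<in> scar R. S_alpha R a \<noteq> {}}"

definition wheel_distributive :: "'a sstruct \<Rightarrow> bool" where
  "wheel_distributive R \<longleftrightarrow>
     (\<forall>s\<in>scar R. \<forall>t\<in>scar R. \<forall>r\<in>scar R.
        sadd R (smul R s (sadd R t r)) (smul R s (szero R)) = sadd R (smul R s t) (smul R s r))"

definition s_associative :: "'a sstruct \<Rightarrow> bool" where
  "s_associative R \<longleftrightarrow>
     (\<forall>m\<in>S_alpha R (szero R). \<forall>n\<in>S_alpha R (szero R). \<forall>s\<in>scar R.
        smul R m (smul R n s) =
        ssub R (smul R (smul R m n) s)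
               (smul R (smul R (ssub R m (sone R)) (ssub R n (sone R))) (smul R (szero R) s)))"

definition is_base :: "'a sstruct \<Rightarrow> 'a \<Rightarrow> 'a \<Rightarrow> bool" where
  "is_base R a q \<longleftrightarrow>
     q \<in> S_alpha R a \<and>
     (\<forall>b\<in>S_alpha R (szero R). sadd R q b \<in> S_alpha R a) \<and>
     (\<forall>s\<in>S_alpha R a. \<exists>b\<in>S_alpha R (szero R). s = sadd R q b)"

definition coordinated :: "'a sstruct \<Rightarrow> bool" where
  "coordinated R \<longleftrightarrow> S_alpha R (szero R) \<noteq> {} \<and> (\<forall>a\<in>Lambda R. \<exists>q. is_base R a q)"

definition q0 :: "'a sstruct \<Rightarrow> 'a \<Rightarrow> 'a" where
  "q0 R a = (if a = sone R then sq1 R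
             else ssub R (smul R a (sadd R (sq1 R) (sone R))) (sone R))"

definition standard_bases :: "'a sstruct \<Rightarrow> bool" where
  "standard_bases R \<longleftrightarrow> coordinated R \<and> is_base R (sone R) (sq1 R) \<and>
     (\<forall>a\<in>Lambda R. q0 R a \<in> S_alpha R a \<and> is_base R a (q0 R a))"

definition essential :: "'a sstruct \<Rightarrow> bool" where
  "essential R \<longleftrightarrow> s_structure R \<and> s_commutative R \<and> wheel_distributive R \<and>
     s_associative R \<and> standard_bases R \<and>
     szero R \<in> S_alpha R (szero R) \<and> sone R \<in> S_alpha R (szero R) \<and>
     S_alpha R (szero R) = {smul R (sone R) x | x. x \<in> S_alpha R (szero R)}"

definition unity :: "'a sstruct \<Rightarrow> 'a \<Rightarrow> bool" where
  "unity R e \<longleftrightarrow> e \<in> Lambda R \<and> (\<forall>s\<in>scar R. smul R e s = s \<and> smul R s e = s)"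

definition s_ring :: "'a sstruct \<Rightarrow> bool" where
  "s_ring R \<longleftrightarrow> essential R \<and> (\<exists>e. unity R e)"

definition s_field :: "'a sstruct \<Rightarrow> bool" where
  "s_field R \<longleftrightarrow> s_ring R \<and>
     (\<exists>e. unity R e \<and>
        (\<forall>x\<in>S_alpha R (szero R). x \<noteq> szero R \<longrightarrow>
           (\<exists>y\<in>S_alpha R (szero R). smul R x y = e \<and> smul R y x = e)))"

definition reversible :: "'a sstruct \<Rightarrow> 'a \<Rightarrow> bool" where
  "reversible R a \<longleftrightarrow> (\<exists>a'\<in>Lambda R.
     sq1 R = ssub R (smul R a' (sadd R (q0 R a) a)) a)"

definition div_zero :: "'a sstruct \<Rightarrow> 'a \<Rightarrow> 'a" where
  "div_zero R a = q0 R a"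

end

theory Submission
  imports Defs
begin

locale sf =
  fixes R :: "'a sstruct" (structure)
  assumes F: "s_field R"
begin

abbreviation "C \<equiv> scar R"
abbreviation add (infixl "\<oplus>" 65) where "x \<oplus> y \<equiv> sadd R x y"
abbreviation mul (infixl "\<otimes>" 70) where "x \<otimes> y \<equiv> smul R x y"
abbreviation "Z \<equiv> szero R"
abbreviation "I1 \<equiv> sone R"
abbreviation "N \<equiv> sneg R"
abbreviation "S0 \<equiv> S_alpha R Z"

lemma ess: "essential R" using F unfolding s_field_def s_ring_def by auto
lemma ss: "s_structure R" using ess unfolding essential_def by blast

lemma add_closed: "x \<in> C \<Longrightarrow> y \<in> C \<Longrightarrow> x \<oplus> y \<in> C" using ss unfolding s_structure_def by blast
lemma add_assoc: "x \<in> C \<Longrightarrow> y \<in> C \<Longrightarrow> z \<in> C \<Longrightarrow> x \<oplus> y \<oplus> z = x \<oplus> (y \<oplus> z)"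
  using ss unfolding s_structure_def by blast
lemma add_comm: "x \<in> C \<Longrightarrow> y \<in> C \<Longrightarrow> x \<oplus> y = y \<oplus> x" using ss unfolding s_structure_def by blast
lemma zero_c: "Z \<in> C" using ss unfolding s_structure_def by blast
lemma add_zero: "x \<in> C \<Longrightarrow> x \<oplus> Z = x" using ss unfolding s_structure_def by blast
lemma neg_c: "x \<in> C \<Longrightarrow> N x \<in> C" using ss unfolding s_structure_def by blast
lemma add_neg: "x \<in> C \<Longrightarrow> x \<oplus> N x = Z" using ss unfolding s_structure_def by blast
lemma mul_c: "x \<in> C \<Longrightarrow> y \<in> C \<Longrightarrow> x \<otimes> y \<in> C" using ss unfolding s_structure_def by blast
lemma one_c: "I1 \<in> C" using ss unfolding s_structure_def by blast
lemma comm: "x \<in> C \<Longrightarrow> y \<in> C \<Longrightarrow> x \<otimes> y = y \<otimes> x"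
  using ess unfolding essential_def s_commutative_def by auto
lemma wd: "s \<in> C \<Longrightarrow> t \<in> C \<Longrightarrow> r \<in> C \<Longrightarrow> s \<otimes> (t \<oplus> r) \<oplus> s \<otimes> Z = s \<otimes> t \<oplus> s \<otimes> r"
  using ess unfolding essential_def wheel_distributive_def by auto
lemma sa: "m \<in> S0 \<Longrightarrow> n \<in> S0 \<Longrightarrow> s \<in> C \<Longrightarrow>
   m \<otimes> (n \<otimes> s) = ssub R ((m \<otimes> n) \<otimes> s) ((ssub R m I1 \<otimes> ssub R n I1) \<otimes> (Z \<otimes> s))"
  using ess unfolding essential_def s_associative_def by auto
lemma S0_iff: "x \<in> S0 \<longleftrightarrow> x \<in> C \<and> Z \<otimes> x = Z \<and> x \<otimes> Z = Z"
  unfolding S_alpha_def by auto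
lemma zeroS0: "Z \<in> S0" using ess unfolding essential_def by blast
lemma oneS0: "I1 \<in> S0" using ess unfolding essential_def by blast
lemma S0rep: "S0 = {I1 \<otimes> x | x. x \<in> S0}" using ess unfolding essential_def by blast
lemma sq1: "sq1 R \<in> C" "Z \<otimes> sq1 R = I1"
  using ess unfolding essential_def standard_bases_def is_base_def S_alpha_def by auto

lemma cancel: "a \<in> C \<Longrightarrow> b \<in> C \<Longrightarrow> c \<in> C \<Longrightarrow> a \<oplus> c = b \<oplus> c \<Longrightarrow> a = b"
  by (metis add_assoc add_neg add_zero neg_c)
lemma zero_add: "x \<in> C \<Longrightarrow> Z \<oplus> x = x" by (metis add_comm add_zero zero_c)
lemma sub_self_eq: "a \<in> C \<Longrightarrow> b \<in> C \<Longrightarrow> a = ssub R a b \<Longrightarrow> b = Z"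
  unfolding ssub_def by (metis add_assoc add_comm add_neg add_zero neg_c zero_add)

lemma unity_ex: "\<exists>e. unity R e \<and> (\<forall>x\<in>S0. x \<noteq> Z \<longrightarrow> (\<exists>y\<in>S0. x \<otimes> y = e \<and> y \<otimes> x = e))"
  using F unfolding s_field_def by blast

lemma neg_S0: "x \<in> S0 \<Longrightarrow> N x \<in> S0"
proof -
  assume x: "x \<in> S0"
  hence xc: "x \<in> C" and z: "Z \<otimes> x = Z" using S0_iff by auto
  have "Z \<otimes> (x \<oplus> N x) \<oplus> Z \<otimes> Z = Z \<otimes> x \<oplus> Z \<otimes> N x" using wd zero_c xc neg_c by blast
  hence "Z \<oplus> Z = Z \<oplus> Z \<otimes> N x" using add_neg xc z zeroS0 S0_iff by simp
  hence "Z \<otimes> N x = Z" using zero_add add_zero zero_c mul_c neg_c xc by metis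
  thus ?thesis using S0_iff neg_c xc comm zero_c by metis
qed

lemma add_S0: "x \<in> S0 \<Longrightarrow> y \<in> S0 \<Longrightarrow> x \<oplus> y \<in> S0"
proof -
  assume x: "x \<in> S0" and y: "y \<in> S0"
  hence xc: "x \<in> C" and yc: "y \<in> C" and z: "Z \<otimes> x = Z" "Z \<otimes> y = Z" using S0_iff by auto
  have "Z \<otimes> (x \<oplus> y) \<oplus> Z \<otimes> Z = Z \<otimes> x \<oplus> Z \<otimes> y" using wd zero_c xc yc by blast
  hence "Z \<otimes> (x \<oplus> y) = Z" using z zeroS0 S0_iff add_zero mul_c zero_c add_closed xc yc by metis
  thus ?thesis using S0_iff add_closed xc yc comm zero_c by metis
qed

lemma sub_S0: "x \<in> S0 \<Longrightarrow> y \<in> S0 \<Longrightarrow> ssub R x y \<in> S0"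
  unfolding ssub_def using add_S0 neg_S0 by blast

lemma S0C: "x \<in> S0 \<Longrightarrow> x \<in> C" using S0_iff by blast

lemma zero_right: "m \<in> S0 \<Longrightarrow> n \<in> S0 \<Longrightarrow> e \<in> C \<Longrightarrow> (\<forall>s\<in>C. e \<otimes> s = s \<and> s \<otimes> e = s) \<Longrightarrow> e \<in> S0
   \<Longrightarrow> (ssub R m I1 \<otimes> ssub R n I1) \<otimes> Z = Z"
proof -
  assume m: "m \<in> S0" and n: "n \<in> S0" and ec: "e \<in> C" and u: "\<forall>s\<in>C. e \<otimes> s = s \<and> s \<otimes> e = s" and e0: "e \<in> S0"
  have mc: "m \<in> C" and nc: "n \<in> C" using m n S0C by auto
  have "m \<otimes> (n \<otimes> e) = ssub R ((m \<otimes> n) \<otimes> e) ((ssub R m I1 \<otimes> ssub R n I1) \<otimes> (Z \<otimes> e))"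
    using sa m n ec by blast
  hence "m \<otimes> n = ssub R (m \<otimes> n) ((ssub R m I1 \<otimes> ssub R n I1) \<otimes> Z)"
    using u mc nc mul_c zero_c by simp
  thus ?thesis using sub_self_eq mul_c mc nc sub_S0 m n oneS0 S0C zero_c by metis
qed

lemma fin: "a \<in> C \<Longrightarrow> b \<in> C \<Longrightarrow> c \<in> C \<Longrightarrow> u \<in> C \<Longrightarrow> c \<oplus> u = a \<oplus> b \<Longrightarrow>
  (a \<oplus> N u) \<oplus> (b \<oplus> N u) = c \<oplus> N u"
proof -
  assume a: "a \<in> C" and b: "b \<in> C" and c: "c \<in> C" and u: "u \<in> C" and h: "c \<oplus> u = a \<oplus> b"
  have nu: "N u \<in> C" using neg_c u .
  have "(a \<oplus> N u) \<oplus> (b \<oplus> N u) = a \<oplus> (N u \<oplus> (b \<oplus> N u))"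
    using add_assoc a nu add_closed b by simp
  also have "N u \<oplus> (b \<oplus> N u) = b \<oplus> (N u \<oplus> N u)"
    using add_assoc[OF nu b nu] add_comm[OF nu b] add_assoc[OF b nu nu] by simp
  also have "a \<oplus> (b \<oplus> (N u \<oplus> N u)) = (a \<oplus> b) \<oplus> (N u \<oplus> N u)"
    using add_assoc a b nu add_closed by simp
  also have "\<dots> = (c \<oplus> u) \<oplus> (N u \<oplus> N u)" using h by simp
  also have "\<dots> = c \<oplus> (u \<oplus> N u) \<oplus> N u" using add_assoc[OF c u nu] add_assoc[OF c u add_closed[OF nu nu]] add_assoc[OF c add_closed[OF u nu] nu] add_assoc[OF u nu nu] by simp
  also have "\<dots> = c \<oplus> N u" using add_neg u add_zero c by simp
  finally show ?thesis .
qed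

lemma neg_unique: "a \<in> C \<Longrightarrow> b \<in> C \<Longrightarrow> Z = a \<oplus> b \<Longrightarrow> b = N a"
proof -
  assume a: "a \<in> C" and b: "b \<in> C" and h: "Z = a \<oplus> b"
  have "b = b \<oplus> (a \<oplus> N a)" using add_neg a add_zero b by simp
  also have "\<dots> = (a \<oplus> b) \<oplus> N a" using add_assoc[OF b a neg_c[OF a]] add_comm[OF a b] by simp
  finally show ?thesis using h zero_add neg_c a by simp
qed

lemma negZ: "N Z = Z" using add_neg zero_c zero_add neg_c by metis

lemma main_lem: "\<exists>a. a \<in> S0 \<and> a \<noteq> Z \<Longrightarrow> I1 \<otimes> (sq1 R \<oplus> I1) = sq1 R \<oplus> I1"
proof -
  assume ex: "\<exists>a. a \<in> S0 \<and> a \<noteq> Z"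
  obtain e where un: "unity R e" and inv: "\<forall>x\<in>S0. x \<noteq> Z \<longrightarrow> (\<exists>y\<in>S0. x \<otimes> y = e \<and> y \<otimes> x = e)"
    using unity_ex by blast
  have ec: "e \<in> C" using un unfolding unity_def Lambda_def by blast
  have u: "\<forall>s\<in>C. e \<otimes> s = s \<and> s \<otimes> e = s" using un unfolding unity_def by blast
  have e0: "e \<in> S0" using u zero_c ec S0_iff by metis
  have oc: "I1 \<in> C" using one_c .
  have "I1 \<noteq> Z"
  proof
    assume h: "I1 = Z"
    obtain a where a: "a \<in> S0" "a \<noteq> Z" using ex by blast
    then obtain x where "x \<in> S0" "a = I1 \<otimes> x" using S0rep by blast
    thus False using h a S0_iff by auto
  qed
  then obtain v where v: "v \<in> S0" "I1 \<otimes> v = e" using inv oneS0 by blast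
  define n where "n = I1 \<oplus> e"
  have n0: "n \<in> S0" unfolding n_def using add_S0 oneS0 e0 by blast
  have nc: "n \<in> C" using n0 S0C by blast
  have nsub: "ssub R n I1 = e" unfolding n_def ssub_def
    using add_comm[OF oc ec] add_assoc[OF ec oc neg_c[OF oc]] add_neg[OF oc] add_zero[OF ec] by simp
  have em1: "ssub R e I1 \<in> S0" using sub_S0 e0 oneS0 by blast
  have em1c: "ssub R e I1 \<in> C" using em1 S0C by blast
  have "e \<otimes> (n \<otimes> sq1 R) = ssub R ((e \<otimes> n) \<otimes> sq1 R) ((ssub R e I1 \<otimes> ssub R n I1) \<otimes> (Z \<otimes> sq1 R))"
    using sa e0 n0 sq1 by blast
  hence "n \<otimes> sq1 R = ssub R (n \<otimes> sq1 R) (ssub R e I1 \<otimes> I1)"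
    using u nc sq1 mul_c nsub em1c by simp
  hence B: "ssub R e I1 \<otimes> I1 = Z" using sub_self_eq mul_c nc sq1 em1c oc by metis
  have "I1 \<otimes> (e \<oplus> N I1) \<oplus> I1 \<otimes> Z = I1 \<otimes> e \<oplus> I1 \<otimes> N I1" using wd oc ec neg_c by blast
  moreover have "I1 \<otimes> (e \<oplus> N I1) = Z" using B comm em1c oc unfolding ssub_def by metis
  moreover have "I1 \<otimes> Z = Z" using oneS0 S0_iff by blast
  ultimately have "Z = I1 \<oplus> I1 \<otimes> N I1" using u oc zero_c add_zero by simp
  hence C1: "I1 \<otimes> N I1 = N I1" using neg_unique oc mul_c neg_c by metis
  have "I1 \<otimes> (I1 \<oplus> N I1) \<oplus> I1 \<otimes> Z = I1 \<otimes> I1 \<oplus> I1 \<otimes> N I1" using wd oc neg_c by blast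
  hence "Z = I1 \<otimes> I1 \<oplus> N I1" using C1 add_neg oc \<open>I1 \<otimes> Z = Z\<close> add_zero zero_c by simp
  hence C2: "I1 \<otimes> I1 = I1"
  proof -
    assume h: "Z = I1 \<otimes> I1 \<oplus> N I1"
    have c: "I1 \<otimes> I1 \<in> C" using mul_c oc by blast
    have "I1 \<otimes> I1 = I1 \<otimes> I1 \<oplus> (N I1 \<oplus> I1)" using add_comm[OF oc neg_c[OF oc]] add_neg[OF oc] add_zero[OF c] by simp
    also have "\<dots> = Z \<oplus> I1" using add_assoc[OF c neg_c[OF oc] oc] h by simp
    finally show ?thesis using zero_add oc by simp
  qed
  have vc: "v \<in> C" using v S0C by blast
  have "I1 \<otimes> (I1 \<otimes> v) = ssub R ((I1 \<otimes> I1) \<otimes> v) ((ssub R I1 I1 \<otimes> ssub R I1 I1) \<otimes> (Z \<otimes> v))"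
    using sa oneS0 vc by blast
  moreover have "Z \<otimes> v = Z" using v S0_iff by blast
  moreover have "(ssub R I1 I1 \<otimes> ssub R I1 I1) \<otimes> Z = Z" using zero_right oneS0 ec u e0 by blast
  ultimately have "I1 \<otimes> e = e" using v C2 negZ unfolding ssub_def using add_zero ec by simp
  hence "I1 = e" using u oc by simp
  thus ?thesis using u add_closed sq1 oc by simp
qed

end

lemma q0_eq:
  assumes "sf R" and x: "x \<in> scar R" and ex: "\<exists>a. a \<in> S_alpha R (szero R) \<and> a \<noteq> szero R"
  shows "q0 R x = ssub R (smul R x (sadd R (sq1 R) (sone R))) (sone R)"
proof (cases "x = sone R")
  case True
  interpret sf R by fact
  have "I1 \<otimes> (sq1 R \<oplus> I1) = sq1 R \<oplus> I1" using main_lem ex by blast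
  thus ?thesis using True unfolding q0_def ssub_def
    using add_assoc add_neg add_zero one_c neg_c sq1 by simp
next
  case False
  thus ?thesis unfolding q0_def by simp
qed

theorem proposition4p2p5:
  assumes "s_field R"
    and "\<alpha> \<in> S_alpha R (szero R)" and "\<beta> \<in> S_alpha R (szero R)"
    and "\<alpha> \<noteq> szero R" and "\<beta> \<noteq> szero R" and "sadd R \<alpha> \<beta> \<noteq> szero R"
  shows "sadd R (div_zero R \<alpha>) (div_zero R \<beta>) = div_zero R (sadd R \<alpha> \<beta>)"
proof -
  interpret sf R using assms(1) by unfold_locales
  have ex: "\<exists>a. a \<in> S0 \<and> a \<noteq> Z" using assms by blast
  define Q where "Q = sq1 R \<oplus> I1"
  have Qc: "Q \<in> C" unfolding Q_def using add_closed sq1 one_c by blast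
  have ac: "\<alpha> \<in> C" and bc: "\<beta> \<in> C" using assms S0C by auto
  have "Z \<otimes> (sq1 R \<oplus> I1) \<oplus> Z \<otimes> Z = Z \<otimes> sq1 R \<oplus> Z \<otimes> I1" using wd zero_c sq1 one_c by blast
  moreover have "Z \<otimes> Z = Z" "Z \<otimes> I1 = Z" using zeroS0 oneS0 S0_iff by auto
  ultimately have "Z \<otimes> Q = I1" unfolding Q_def using sq1 add_zero mul_c[OF zero_c Qc] add_zero[OF one_c] unfolding Q_def by simp
  hence QZ: "Q \<otimes> Z = I1" using comm[OF Qc zero_c] by simp
  have "Q \<otimes> (\<alpha> \<oplus> \<beta>) \<oplus> Q \<otimes> Z = Q \<otimes> \<alpha> \<oplus> Q \<otimes> \<beta>" using wd Qc ac bc by blast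
  note WD = this
  have e1: "(\<alpha> \<oplus> \<beta>) \<otimes> Q = Q \<otimes> (\<alpha> \<oplus> \<beta>)" by (rule comm[OF add_closed[OF ac bc] Qc])
  have e2: "\<alpha> \<otimes> Q = Q \<otimes> \<alpha>" by (rule comm[OF ac Qc])
  have e3: "\<beta> \<otimes> Q = Q \<otimes> \<beta>" by (rule comm[OF bc Qc])
  have W: "(\<alpha> \<oplus> \<beta>) \<otimes> Q \<oplus> I1 = \<alpha> \<otimes> Q \<oplus> \<beta> \<otimes> Q"
    unfolding e1 e2 e3 QZ[symmetric] by (rule WD)
  have q: "\<And>x. x \<in> C \<Longrightarrow> div_zero R x = ssub R (x \<otimes> Q) I1"
    unfolding div_zero_def Q_def by (rule q0_eq[OF sf_axioms _ ex])
  have abc: "\<alpha> \<oplus> \<beta> \<in> C" using add_closed ac bc by blast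
  have m1: "\<alpha> \<otimes> Q \<in> C" "\<beta> \<otimes> Q \<in> C" "(\<alpha> \<oplus> \<beta>) \<otimes> Q \<in> C" using mul_c Qc ac bc abc by auto
  show ?thesis unfolding q[OF ac] q[OF bc] q[OF abc] ssub_def
    using fin[OF m1(1) m1(2) m1(3) one_c W] .
qed

end
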